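(* Every pair of orthogonal quantum Latin squares of order $4$ is classical.
   Context: A quantum Latin square (QLS) of order $n$ is an $n\times n$ matrix $\Psi=(\psi_{ij})_{1\le i,j\le n}$ whose entries are unit vectors in $\mathbb C^n$ such that the entries of each row and the entries of each column form an orthonormal basis of $\mathbb C^n$. Two QLS $\Psi=(\psi_{ij})$ and $\Phi=(\phi_{ij})$ of order $n$ are orthogonal if $\{\psi_{ij}\otimes\phi_{ij}: 1\le i,j\le n\}$ is an orthonormal basis of $\mathbb C^n\otimes\mathbb C^n$. Fix the standard orthonormal basis $\ket{1},\dots,\ket{n}$ of $\mathbb C^n$. Two pairs of orthogonal QLS of order $n$ are isotopic if one can be obtained from the other by a sequence of the operations: (i) multiplying individual entries by phase factors; (ii) permuting the rows, and permuting the columns, simultaneously in both squares; (iii) for each square separately, applying one unitary transformation of $\mathbb C^n$ to all entries of that square. A pair is classical if it is isotopic to a pair all of whose entries lie in $\{\ket{1},\dots,\ket{n}\}$. *)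

theory Defs
  imports "HOL-Analysis.Analysis"
begin

text \<open>Vectors of C^n are modelled as complex^'n, where the finite index type 'n has
  CARD('n) = n elements. Rows and columns of a square are also indexed by 'n.\<close>

definition cinner :: "complex^'n \<Rightarrow> complex^'n \<Rightarrow> complex" where
  "cinner x y = (\<Sum>i\<in>UNIV. cnj (x$i) * y$i)"

definition is_onb :: "('i \<Rightarrow> complex^'n) \<Rightarrow> 'i set \<Rightarrow> bool" where
  "is_onb f I \<longleftrightarrow>
     (\<forall>a\<in>I. \<forall>b\<in>I. cinner (f a) (f b) = (if a = b then 1 else 0)) \<and>
     (\<forall>v::complex^'n. \<exists>c. v = (\<Sum>a\<in>I. c a *s f a))"

type_synonym 'n qsquare = "'n \<Rightarrow> 'n \<Rightarrow> complex^'n"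

definition QLS :: "'n::finite qsquare \<Rightarrow> bool" where
  "QLS \<Psi> \<longleftrightarrow> (\<forall>i j. cinner (\<Psi> i j) (\<Psi> i j) = 1) \<and>
     (\<forall>i. is_onb (\<lambda>j. \<Psi> i j) UNIV) \<and> (\<forall>j. is_onb (\<lambda>i. \<Psi> i j) UNIV)"

definition tensor :: "complex^'n \<Rightarrow> complex^'m \<Rightarrow> complex^('n \<times> 'm)" where
  "tensor x y = (\<chi> p. x $ fst p * y $ snd p)"

definition orthogonal_QLS :: "'n::finite qsquare \<Rightarrow> 'n qsquare \<Rightarrow> bool" where
  "orthogonal_QLS \<Psi> \<Phi> \<longleftrightarrow>
     is_onb (\<lambda>(i,j). tensor (\<Psi> i j) (\<Phi> i j)) (UNIV :: ('n \<times> 'n) set)"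

definition cadj :: "complex^'n^'m \<Rightarrow> complex^'m^'n" where
  "cadj U = (\<chi> i j. cnj (U $ j $ i))"

definition unitary :: "complex^'n^'n \<Rightarrow> bool" where
  "unitary U \<longleftrightarrow> cadj U ** U = mat 1 \<and> U ** cadj U = mat 1"

inductive isotopy_step :: "'n::finite qsquare \<times> 'n qsquare \<Rightarrow> 'n qsquare \<times> 'n qsquare \<Rightarrow> bool" where
  phase: "(\<forall>i j. norm (c i j) = 1 \<and> norm (d i j) = 1) \<Longrightarrow>
     isotopy_step (\<Psi>, \<Phi>) (\<lambda>i j. c i j *s \<Psi> i j, \<lambda>i j. d i j *s \<Phi> i j)"
| permute: "bij \<sigma> \<Longrightarrow> bij \<tau> \<Longrightarrow>
     isotopy_step (\<Psi>, \<Phi>) (\<lambda>i j. \<Psi> (\<sigma> i) (\<tau> j), \<lambda>i j. \<Phi> (\<sigma> i) (\<tau> j))"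
| unitary_first: "unitary U \<Longrightarrow> isotopy_step (\<Psi>, \<Phi>) (\<lambda>i j. U *v \<Psi> i j, \<Phi>)"
| unitary_second: "unitary U \<Longrightarrow> isotopy_step (\<Psi>, \<Phi>) (\<Psi>, \<lambda>i j. U *v \<Phi> i j)"

definition isotopic :: "'n::finite qsquare \<times> 'n qsquare \<Rightarrow> 'n qsquare \<times> 'n qsquare \<Rightarrow> bool" where
  "isotopic = isotopy_step\<^sup>*\<^sup>*"

text \<open>Standard basis vector |k> is axis k 1.\<close>
definition classical_pair :: "'n::finite qsquare \<Rightarrow> 'n qsquare \<Rightarrow> bool" where
  "classical_pair \<Psi> \<Phi> \<longleftrightarrow> (\<exists>A B. isotopic (\<Psi>, \<Phi>) (A, B) \<and>
     (\<forall>i j. A i j \<in> range (\<lambda>k. axis k 1) \<and> B i j \<in> range (\<lambda>k. axis k 1)))"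

end

theory Submission
  imports Defs
begin

lemma sum_single_UNIV:
  fixes f :: "'a::finite \<Rightarrow> 'b::comm_monoid_add"
  assumes "\<And>k. k \<noteq> m \<Longrightarrow> f k = 0"
  shows "(\<Sum>k\<in>UNIV. f k) = f m"
proof -
  have "(\<Sum>k\<in>UNIV. f k) = f m + (\<Sum>k\<in>UNIV - {m}. f k)"
    by (simp add: sum.remove)
  also have "(\<Sum>k\<in>UNIV - {m}. f k) = 0"
    using assms by (intro sum.neutral) auto
  finally show ?thesis by simp
qed

lemma cinner_cnj: "cinner y x = cnj (cinner x y)"
  unfolding cinner_def by (simp add: mult.commute)

lemma cinner_scale_right: "cinner x (c *s y) = c * cinner x y"
  unfolding cinner_def by (simp add: sum_distrib_left algebra_simps)

lemma cinner_sum_right: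
  "cinner x (\<Sum>a\<in>A. c a *s f a) = (\<Sum>a\<in>A. c a * cinner x (f a))"
  unfolding cinner_def
  by (simp add: sum_component sum_distrib_left sum_distrib_right algebra_simps sum.swap[of _ A])

lemma cinner_tensor:
  "cinner (tensor x y) (tensor x' y') = cinner x x' * cinner y y'"
  unfolding cinner_def tensor_def
  by (simp add: sum_product UNIV_Times_UNIV[symmetric] sum.cartesian_product algebra_simps
      split_beta del: UNIV_Times_UNIV)

lemma onb_orth:
  assumes "is_onb f UNIV"
  shows "cinner (f a) (f b) = (if a = b then 1 else 0)"
  using assms unfolding is_onb_def by auto

lemma onb_expand:
  fixes f :: "'i::finite \<Rightarrow> complex^'n"
  assumes "is_onb f UNIV"
  shows "v = (\<Sum>a\<in>UNIV. cinner (f a) v *s f a)"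
proof -
  obtain c where c: "v = (\<Sum>a\<in>UNIV. c a *s f a)"
    using assms unfolding is_onb_def by blast
  have "cinner (f b) v = c b" for b
  proof -
    have "cinner (f b) v = (\<Sum>a\<in>UNIV. c a * cinner (f b) (f a))"
      by (subst c, rule cinner_sum_right)
    also have "\<dots> = c b * cinner (f b) (f b)"
      by (rule sum_single_UNIV) (simp add: onb_orth[OF assms])
    also have "\<dots> = c b" by (simp add: onb_orth[OF assms])
    finally show ?thesis .
  qed
  then show ?thesis using c by simp
qed

lemma onb_inner:
  fixes f :: "'i::finite \<Rightarrow> complex^'n"
  assumes "is_onb f UNIV"
  shows "cinner u v = (\<Sum>a\<in>UNIV. cinner u (f a) * cinner (f a) v)"
proof -
  have "cinner u v = cinner u (\<Sum>a\<in>UNIV. cinner (f a) v *s f a)"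
    using onb_expand[OF assms, of v] by simp
  also have "\<dots> = (\<Sum>a\<in>UNIV. cinner (f a) v * cinner u (f a))"
    by (rule cinner_sum_right)
  finally show ?thesis by (simp add: mult.commute)
qed

lemma onb_parseval:
  fixes f :: "'i::finite \<Rightarrow> complex^'n"
  assumes "is_onb f UNIV" and "cinner v v = 1"
  shows "(\<Sum>a\<in>UNIV. (cmod (cinner (f a) v))^2) = 1"
proof -
  have "complex_of_real (\<Sum>a\<in>UNIV. (cmod (cinner (f a) v))^2)
      = (\<Sum>a\<in>UNIV. cinner v (f a) * cinner (f a) v)"
    by (simp add: complex_norm_square[symmetric] cinner_cnj[of v] mult.commute)
  also have "\<dots> = 1" using onb_inner[OF assms(1), of v v] assms(2) by simp
  finally show ?thesis by (metis of_real_eq_1_iff)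
qed

lemma card4_fourth:
  fixes a b c :: "'n::finite"
  assumes "CARD('n) = 4" "a \<noteq> b" "a \<noteq> c" "b \<noteq> c"
  obtains m where "\<And>x. x \<noteq> a \<Longrightarrow> x \<noteq> b \<Longrightarrow> x \<noteq> c \<Longrightarrow> x = m"
proof -
  have "card (UNIV - {a,b,c}) = 1"
    using assms by (simp add: card_Diff_subset)
  then obtain m where "UNIV - {a,b,c} = {m}" by (rule card_1_singletonE)
  then show ?thesis using that by blast
qed

lemma QLS_row: "QLS \<Psi> \<Longrightarrow> is_onb (\<lambda>j. \<Psi> i j) UNIV"
  unfolding QLS_def by blast

lemma QLS_col: "QLS \<Psi> \<Longrightarrow> is_onb (\<lambda>i. \<Psi> i j) UNIV"
  unfolding QLS_def by blast

lemma QLS_norm: "QLS \<Psi> \<Longrightarrow> cinner (\<Psi> i j) (\<Psi> i j) = 1"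
  unfolding QLS_def by blast

lemma QLS_row_orth: "QLS \<Psi> \<Longrightarrow> j \<noteq> j' \<Longrightarrow> cinner (\<Psi> i j) (\<Psi> i j') = 0"
  using onb_orth[OF QLS_row[of \<Psi> i], of j j'] by simp

lemma QLS_col_orth: "QLS \<Psi> \<Longrightarrow> i \<noteq> i' \<Longrightarrow> cinner (\<Psi> i j) (\<Psi> i' j) = 0"
  using onb_orth[OF QLS_col[of \<Psi> j], of i i'] by simp

lemma lemC:
  fixes \<Psi> \<Phi> :: "'n::finite qsquare"
  assumes card: "CARD('n) = 4"
    and Q1: "QLS \<Psi>" and Q2: "QLS \<Phi>"
    and orth: "\<And>i j i' j'. (i,j) \<noteq> (i',j') \<Longrightarrow>
        cinner (\<Psi> i j) (\<Psi> i' j') * cinner (\<Phi> i j) (\<Phi> i' j') = 0"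
    and r: "r1 \<noteq> r2" "r1 \<noteq> i" "r2 \<noteq> i"
    and n1: "cinner (\<Psi> r1 j) (\<Psi> i kc) \<noteq> 0"
    and n2: "cinner (\<Psi> i kc) (\<Psi> r2 j) \<noteq> 0"
  shows False
proof (cases "\<exists>k. k \<noteq> kc \<and> cinner (\<Psi> r1 j) (\<Psi> i k) \<noteq> 0 \<and> cinner (\<Psi> i k) (\<Psi> r2 j) \<noteq> 0")
  case True
  then obtain k where k: "k \<noteq> kc" "cinner (\<Psi> r1 j) (\<Psi> i k) \<noteq> 0"
      "cinner (\<Psi> i k) (\<Psi> r2 j) \<noteq> 0" by blast
  have kj: "k \<noteq> j" using k(2) QLS_col_orth[OF Q1 r(2)] by auto
  have kcj: "kc \<noteq> j" using n1 QLS_col_orth[OF Q1 r(2)] by auto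
  obtain m where m: "\<And>x. x \<noteq> k \<Longrightarrow> x \<noteq> kc \<Longrightarrow> x \<noteq> j \<Longrightarrow> x = m"
    using card4_fourth[OF card k(1) kj kcj] by metis
  have P0: "cinner (\<Phi> r1 j) (\<Phi> i k') = 0" if km: "k' \<noteq> m" for k'
  proof -
    consider "k' = k" | "k' = kc" | "k' = j" using m[of k'] km by blast
    then show ?thesis
    proof cases
      case 1 then show ?thesis using orth[of r1 j i k] k(2) r by auto
    next
      case 2 then show ?thesis using orth[of r1 j i kc] n1 r by auto
    next
      case 3 then show ?thesis using QLS_col_orth[OF Q2 r(2)] by auto
    qed
  qed
  have Q0: "cinner (\<Phi> i k') (\<Phi> r2 j) = 0" if km: "k' \<noteq> m" for k'
  proof -
    consider "k' = k" | "k' = kc" | "k' = j" using m[of k'] km by blast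
    then show ?thesis
    proof cases
      case 1 then show ?thesis using orth[of i k r2 j] k(3) r by auto
    next
      case 2 then show ?thesis using orth[of i kc r2 j] n2 r by auto
    next
      case 3 then show ?thesis using QLS_col_orth[OF Q2 r(3)[symmetric]] by auto
    qed
  qed
  have R: "is_onb (\<lambda>k. \<Phi> i k) UNIV" by (rule QLS_row[OF Q2])
  have "1 = cinner (\<Phi> r1 j) (\<Phi> r1 j)" using QLS_norm[OF Q2] by simp
  also have "\<dots> = (\<Sum>k'\<in>UNIV. cinner (\<Phi> r1 j) (\<Phi> i k') * cinner (\<Phi> i k') (\<Phi> r1 j))"
    by (rule onb_inner[OF R])
  also have "\<dots> = cinner (\<Phi> r1 j) (\<Phi> i m) * cinner (\<Phi> i m) (\<Phi> r1 j)"
    by (rule sum_single_UNIV) (simp add: P0)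
  finally have Pm: "cinner (\<Phi> r1 j) (\<Phi> i m) \<noteq> 0" by auto
  have "1 = cinner (\<Phi> r2 j) (\<Phi> r2 j)" using QLS_norm[OF Q2] by simp
  also have "\<dots> = (\<Sum>k'\<in>UNIV. cinner (\<Phi> r2 j) (\<Phi> i k') * cinner (\<Phi> i k') (\<Phi> r2 j))"
    by (rule onb_inner[OF R])
  also have "\<dots> = cinner (\<Phi> r2 j) (\<Phi> i m) * cinner (\<Phi> i m) (\<Phi> r2 j)"
    by (rule sum_single_UNIV) (simp add: Q0)
  finally have Qm: "cinner (\<Phi> i m) (\<Phi> r2 j) \<noteq> 0" by auto
  have "0 = cinner (\<Phi> r1 j) (\<Phi> r2 j)" using QLS_col_orth[OF Q2 r(1)] by simp
  also have "\<dots> = (\<Sum>k'\<in>UNIV. cinner (\<Phi> r1 j) (\<Phi> i k') * cinner (\<Phi> i k') (\<Phi> r2 j))"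
    by (rule onb_inner[OF R])
  also have "\<dots> = cinner (\<Phi> r1 j) (\<Phi> i m) * cinner (\<Phi> i m) (\<Phi> r2 j)"
    by (rule sum_single_UNIV) (simp add: P0)
  finally show False using Pm Qm by simp
next
  case False
  have R: "is_onb (\<lambda>k. \<Psi> i k) UNIV" by (rule QLS_row[OF Q1])
  have "0 = cinner (\<Psi> r1 j) (\<Psi> r2 j)" using QLS_col_orth[OF Q1 r(1)] by simp
  also have "\<dots> = (\<Sum>k'\<in>UNIV. cinner (\<Psi> r1 j) (\<Psi> i k') * cinner (\<Psi> i k') (\<Psi> r2 j))"
    by (rule onb_inner[OF R])
  also have "\<dots> = cinner (\<Psi> r1 j) (\<Psi> i kc) * cinner (\<Psi> i kc) (\<Psi> r2 j)"
    by (rule sum_single_UNIV) (use False in auto)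
  finally show False using n1 n2 by simp
qed

lemma par_or_orth:
  fixes \<Psi> \<Phi> :: "'n::finite qsquare"
  assumes card: "CARD('n) = 4"
    and Q1: "QLS \<Psi>" and Q2: "QLS \<Phi>"
    and orth: "\<And>i j i' j'. (i,j) \<noteq> (i',j') \<Longrightarrow>
        cinner (\<Psi> i j) (\<Psi> i' j') * cinner (\<Phi> i j) (\<Phi> i' j') = 0"
  shows "cinner (\<Psi> i kc) (\<Psi> r j) = 0 \<or> cmod (cinner (\<Psi> i kc) (\<Psi> r j)) = 1"
proof (cases "r = i")
  case True
  then show ?thesis using QLS_row_orth[OF Q1] QLS_norm[OF Q1] by (cases "kc = j") auto
next
  case ri: False
  show ?thesis
  proof (cases "cinner (\<Psi> i kc) (\<Psi> r j) = 0")
    case True then show ?thesis by simp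
  next
    case False
    then have nz: "cinner (\<Psi> i kc) (\<Psi> r j) \<noteq> 0" .
    have jkc: "j \<noteq> kc" using nz QLS_col_orth[OF Q1, of i r] ri by auto
    have nz': "cinner (\<Psi> r j) (\<Psi> i kc) \<noteq> 0" using nz by (subst cinner_cnj) simp
    have zero: "cmod (cinner (\<Psi> r' j) (\<Psi> i kc)) ^ 2 = 0" if "r' \<noteq> r" for r'
    proof (cases "r' = i")
      case True then show ?thesis using QLS_row_orth[OF Q1 jkc] by simp
    next
      case False
      have "cinner (\<Psi> r' j) (\<Psi> i kc) = 0"
      proof (rule ccontr)
        assume "cinner (\<Psi> r' j) (\<Psi> i kc) \<noteq> 0"
        then have "cinner (\<Psi> i kc) (\<Psi> r' j) \<noteq> 0" by (subst cinner_cnj) simp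
        then show False using lemC[OF card Q1 Q2 orth _ ri False nz'] that by auto
      qed
      then show ?thesis by simp
    qed
    have "1 = (\<Sum>r'\<in>UNIV. (cmod (cinner (\<Psi> r' j) (\<Psi> i kc)))^2)"
      using onb_parseval[OF QLS_col[OF Q1] QLS_norm[OF Q1]] by simp
    also have "\<dots> = (cmod (cinner (\<Psi> r j) (\<Psi> i kc)))^2"
      by (rule sum_single_UNIV) (simp add: zero)
    finally have "cmod (cinner (\<Psi> r j) (\<Psi> i kc)) = 1"
      using norm_ge_zero[of "cinner (\<Psi> r j) (\<Psi> i kc)"] by (simp add: power2_eq_1_iff)
    then have "cmod (cinner (\<Psi> i kc) (\<Psi> r j)) = 1"
      by (subst cinner_cnj) simp
    then show ?thesis by simp
  qed
qed

lemma classical_one: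
  fixes \<Psi> :: "'n::finite qsquare"
  assumes Q: "QLS \<Psi>"
    and po: "\<And>i kc r j. cinner (\<Psi> i kc) (\<Psi> r j) = 0 \<or> cmod (cinner (\<Psi> i kc) (\<Psi> r j)) = 1"
  shows "\<exists>U c. unitary U \<and> (\<forall>i j. norm (c i j) = 1) \<and>
           (\<forall>i j. c i j *s (U *v \<Psi> i j) \<in> range (\<lambda>k. axis k 1))"
proof -
  define i0 :: 'n where "i0 = undefined"
  define f where "f = (\<lambda>k. \<Psi> i0 k)"
  have onb: "is_onb f UNIV" using QLS_row[OF Q] f_def by simp
  define U :: "complex^'n^'n" where "U = (\<chi> k l. cnj (f k $ l))"
  have Uv: "(U *v v) $ k = cinner (f k) v" for v k
    by (simp add: U_def matrix_vector_mult_def cinner_def)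
  have "(U ** cadj U) $ a $ b = cinner (f a) (f b)" for a b
    by (simp add: U_def cadj_def matrix_matrix_mult_def cinner_def)
  then have UU: "U ** cadj U = mat 1"
    by (simp add: vec_eq_iff mat_def onb_orth[OF onb])
  then have unit: "unitary U"
    unfolding unitary_def using matrix_left_right_inverse by blast
  have ex: "\<exists>k. cmod (cinner (f k) (\<Psi> i j)) = 1" for i j
  proof (rule ccontr)
    assume "\<not> ?thesis"
    then have "\<And>k. cinner (f k) (\<Psi> i j) = 0" using po unfolding f_def by blast
    then have "(\<Sum>k\<in>UNIV. (cmod (cinner (f k) (\<Psi> i j)))^2) = 0" by simp
    then show False using onb_parseval[OF onb QLS_norm[OF Q]] by simp
  qed
  define kx where "kx i j = (SOME k. cmod (cinner (f k) (\<Psi> i j)) = 1)" for i j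
  have kx: "cmod (cinner (f (kx i j)) (\<Psi> i j)) = 1" for i j
    unfolding kx_def using someI_ex[OF ex] .
  have oth: "cinner (f k) (\<Psi> i j) = 0" if "k \<noteq> kx i j" for i j k
  proof -
    have "1 = (\<Sum>k\<in>UNIV. (cmod (cinner (f k) (\<Psi> i j)))^2)"
      using onb_parseval[OF onb QLS_norm[OF Q]] by simp
    also have "\<dots> = (cmod (cinner (f (kx i j)) (\<Psi> i j)))^2
        + (\<Sum>k\<in>UNIV - {kx i j}. (cmod (cinner (f k) (\<Psi> i j)))^2)"
      by (simp add: sum.remove)
    finally have "(\<Sum>k\<in>UNIV - {kx i j}. (cmod (cinner (f k) (\<Psi> i j)))^2) = 0"
      using kx[of i j] by simp
    then have "\<forall>k\<in>UNIV - {kx i j}. (cmod (cinner (f k) (\<Psi> i j)))^2 = 0"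
      by (subst (asm) sum_nonneg_eq_0_iff) auto
    then show ?thesis using that by simp
  qed
  define c where "c i j = cnj (cinner (f (kx i j)) (\<Psi> i j))" for i j
  have cn: "norm (c i j) = 1" for i j using kx by (simp add: c_def)
  have "c i j *s (U *v \<Psi> i j) = axis (kx i j) 1" for i j
  proof -
    have "cnj z * z = 1" if "cmod z = 1" for z :: complex
      using complex_norm_square[of z] that by (simp add: mult.commute)
    then show ?thesis
      using kx[of i j] oth[of _ i j]
      by (auto simp: vec_eq_iff axis_def Uv c_def)
  qed
  then show ?thesis using unit cn by blast
qed

theorem mainTheorem3:
  fixes \<Psi> \<Phi> :: "'n::finite qsquare"
  assumes "CARD('n) = 4"
    and "QLS \<Psi>" and "QLS \<Phi>"
    and "orthogonal_QLS \<Psi> \<Phi>"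
  shows "classical_pair \<Psi> \<Phi>"
proof -
  note card = assms(1) and Q1 = assms(2) and Q2 = assms(3)
  have onbT: "is_onb (\<lambda>(i,j). tensor (\<Psi> i j) (\<Phi> i j)) (UNIV :: ('n \<times> 'n) set)"
    using assms(4) unfolding orthogonal_QLS_def .
  have orth: "cinner (\<Psi> i j) (\<Psi> i' j') * cinner (\<Phi> i j) (\<Phi> i' j') = 0"
    if "(i,j) \<noteq> (i',j')" for i j i' j'
    using onb_orth[OF onbT, of "(i,j)" "(i',j')"] that by (simp add: cinner_tensor)
  have orth2: "cinner (\<Phi> i j) (\<Phi> i' j') * cinner (\<Psi> i j) (\<Psi> i' j') = 0"
    if "(i,j) \<noteq> (i',j')" for i j i' j'
    using orth[OF that] by (simp add: mult.commute)
  have po1: "\<And>i kc r j. cinner (\<Psi> i kc) (\<Psi> r j) = 0 \<or> cmod (cinner (\<Psi> i kc) (\<Psi> r j)) = 1"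
    using par_or_orth[OF card Q1 Q2 orth] by blast
  have po2: "\<And>i kc r j. cinner (\<Phi> i kc) (\<Phi> r j) = 0 \<or> cmod (cinner (\<Phi> i kc) (\<Phi> r j)) = 1"
    using par_or_orth[OF card Q2 Q1 orth2] by blast
  obtain U1 c1 where U1: "unitary U1" "\<forall>i j. norm (c1 i j) = 1"
      "\<forall>i j. c1 i j *s (U1 *v \<Psi> i j) \<in> range (\<lambda>k. axis k 1)"
    using classical_one[OF Q1 po1] by blast
  obtain U2 c2 where U2: "unitary U2" "\<forall>i j. norm (c2 i j) = 1"
      "\<forall>i j. c2 i j *s (U2 *v \<Phi> i j) \<in> range (\<lambda>k. axis k 1)"
    using classical_one[OF Q2 po2] by blast
  have s1: "isotopy_step (\<Psi>, \<Phi>) (\<lambda>i j. U1 *v \<Psi> i j, \<Phi>)"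
    by (rule isotopy_step.unitary_first[OF U1(1)])
  have s2: "isotopy_step (\<lambda>i j. U1 *v \<Psi> i j, \<Phi>) (\<lambda>i j. U1 *v \<Psi> i j, \<lambda>i j. U2 *v \<Phi> i j)"
    by (rule isotopy_step.unitary_second[OF U2(1)])
  have s3: "isotopy_step (\<lambda>i j. U1 *v \<Psi> i j, \<lambda>i j. U2 *v \<Phi> i j)
      (\<lambda>i j. c1 i j *s (U1 *v \<Psi> i j), \<lambda>i j. c2 i j *s (U2 *v \<Phi> i j))"
    using isotopy_step.phase[of c1 c2 "\<lambda>i j. U1 *v \<Psi> i j" "\<lambda>i j. U2 *v \<Phi> i j"] U1(2) U2(2)
    by simp
  have "isotopic (\<Psi>, \<Phi>) (\<lambda>i j. c1 i j *s (U1 *v \<Psi> i j), \<lambda>i j. c2 i j *s (U2 *v \<Phi> i j))"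
    unfolding isotopic_def using s1 s2 s3
    by (meson r_into_rtranclp rtranclp_trans)
  then show ?thesis unfolding classical_pair_def using U1(3) U2(3) by blast
qed

end
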